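(* For every integer $k\ge1$ and $n=2k-1$, \[k^{n-1}=\sum\frac{n!}{i_0!\,i_1!\cdots i_{k-1}!},\] where the sum runs over all tuples $(i_0,\dots,i_{k-1})$ of nonnegative integers with $i_0+\cdots+i_{k-1}=n$ and $i_0+i_1+\cdots+i_s\ge 2s+2$ for each $s=0,1,\dots,k-2$. *)

theory Defs
  imports Complex_Main
begin

definition tuples :: "nat \<Rightarrow> nat \<Rightarrow> (nat \<Rightarrow> nat) set" where
  "tuples k n = {i. (\<forall>j\<ge>k. i j = 0) \<and> (\<Sum>j<k. i j) = n
                   \<and> (\<forall>s. s + 2 \<le> k \<longrightarrow> (\<Sum>j\<le>s. i j) \<ge> 2 * s + 2)}"

end

theory Submission
  imports Defs
begin


definition Tall :: "nat \<Rightarrow> nat \<Rightarrow> (nat \<Rightarrow> nat) set" where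
  "Tall k n = {a. (\<forall>j\<ge>k. a j = 0) \<and> (\<Sum>j<k. a j) = n}"

lemma Tall_0: "Tall 0 n = (if n = 0 then {\<lambda>_. 0} else {})"
  by (auto simp: Tall_def)

lemma Tall_Suc: "Tall (Suc k) n = (\<lambda>(m,a). a(k:=m)) ` (SIGMA m:{..n}. Tall k (n-m))"
proof
  show "(\<lambda>(m,a). a(k:=m)) ` (SIGMA m:{..n}. Tall k (n-m)) \<subseteq> Tall (Suc k) n"
    by (auto simp: Tall_def)
next
  show "Tall (Suc k) n \<subseteq> (\<lambda>(m,a). a(k:=m)) ` (SIGMA m:{..n}. Tall k (n-m))"
  proof
    fix b assume b: "b \<in> Tall (Suc k) n"
    have s: "(\<Sum>j<k. b j) + b k = n" using b by (simp add: Tall_def)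
    have "b = (\<lambda>(m,a). a(k:=m)) (b k, b(k:=0))" by auto
    moreover have "(b k, b(k:=0)) \<in> (SIGMA m:{..n}. Tall k (n-m))"
      using b s by (auto simp: Tall_def)
    ultimately show "b \<in> (\<lambda>(m,a). a(k:=m)) ` (SIGMA m:{..n}. Tall k (n-m))" by blast
  qed
qed

lemma Tall_inj: "inj_on (\<lambda>(m,a). a(k:=m)) (SIGMA m:{..n}. Tall k (n-m))"
proof (rule inj_onI, clarify)
  fix m a m' a'
  assume a: "a \<in> Tall k (n - m)" and a': "a' \<in> Tall k (n - m')" and e: "a(k := m) = a'(k := m')"
  have "m = m'" using fun_cong[OF e, of k] by simp
  moreover have "a = a'"
  proof
    fix j show "a j = a' j"
      using fun_cong[OF e, of j] a a' by (cases "j = k") (auto simp: Tall_def)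
  qed
  ultimately show "m = m' \<and> a = a'" by simp
qed

lemma multinom:
  "finite (Tall k n) \<and>
   (\<Sum>a\<in>Tall k n. 1 / (\<Prod>j<k. of_nat (fact (a j)) :: rat)) = of_nat k ^ n / of_nat (fact n)"
proof (induction k arbitrary: n)
  case 0
  then show ?case by (simp add: Tall_0)
next
  case (Suc k)
  have fin: "finite (SIGMA m:{..n}. Tall k (n-m))" using Suc by auto
  have "(\<Sum>a\<in>Tall (Suc k) n. 1 / (\<Prod>j<Suc k. of_nat (fact (a j)) :: rat))
      = (\<Sum>x\<in>(SIGMA m:{..n}. Tall k (n-m)). 1 / (\<Prod>j<Suc k. of_nat (fact (((\<lambda>(m,a). a(k:=m)) x) j)) :: rat))"
    unfolding Tall_Suc by (rule sum.reindex[OF Tall_inj, unfolded comp_def])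
  also have "\<dots> = (\<Sum>m\<le>n. \<Sum>a\<in>Tall k (n-m). 1 / (\<Prod>j<k. of_nat (fact (a j)) :: rat) * (1 / of_nat (fact m)))"
  proof -
    have "\<And>m a. (\<Prod>j<Suc k. of_nat (fact ((a(k:=m)) j)) :: rat) = (\<Prod>j<k. of_nat (fact (a j))) * of_nat (fact m)"
      by (simp del: of_nat_fact)
    then show ?thesis
      by (subst sum.Sigma) (auto simp: Suc intro!: sum.cong)
  qed
  also have "\<dots> = (\<Sum>m\<le>n. of_nat k ^ (n-m) / of_nat (fact (n-m)) * (1 / of_nat (fact m)))"
  proof (rule sum.cong[OF refl])
    fix m assume "m \<in> {..n}"
    have "(\<Sum>a\<in>Tall k (n-m). 1 / (\<Prod>j<k. of_nat (fact (a j)) :: rat) * (1 / of_nat (fact m)))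
       = (\<Sum>a\<in>Tall k (n-m). 1 / (\<Prod>j<k. of_nat (fact (a j)) :: rat)) * (1 / of_nat (fact m))"
      by (rule sum_distrib_right[symmetric])
    also have "\<dots> = of_nat k ^ (n-m) / of_nat (fact (n-m)) * (1 / of_nat (fact m))"
      using Suc[of "n-m"] by (simp only:)
    finally show "(\<Sum>a\<in>Tall k (n-m). 1 / (\<Prod>j<k. of_nat (fact (a j)) :: rat) * (1 / of_nat (fact m)))
       = of_nat k ^ (n-m) / of_nat (fact (n-m)) * (1 / of_nat (fact m))" .
  qed
  also have "\<dots> = (\<Sum>m\<le>n. of_nat (n choose m) * 1 ^ m * of_nat k ^ (n-m)) / of_nat (fact n)"
    unfolding sum_divide_distrib
    by (rule sum.cong) (auto simp: binomial_fact field_simps)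
  also have "\<dots> = of_nat (Suc k) ^ n / of_nat (fact n)"
    by (subst binomial_ring[symmetric]) (simp add: add.commute)
  finally show ?case using fin by (simp add: Tall_Suc)
qed



lemma cycle:
  fixes P :: "nat \<Rightarrow> int" and k :: nat
  assumes k: "k > 0" and per: "\<And>t. P (t + k) = P t - 1"
  shows "\<exists>!s. s < k \<and> (\<forall>m. 0 < m \<and> m < k \<longrightarrow> P s \<le> P (s + m))"
proof
  define mn where "mn = Min (P ` {..<k})"
  have mn_le: "\<And>t. t < k \<Longrightarrow> mn \<le> P t" unfolding mn_def by simp
  have "mn \<in> P ` {..<k}" unfolding mn_def using k by (intro Min_in) auto
  then obtain t0 where t0: "t0 < k" "P t0 = mn" by auto
  define r where "r = (LEAST t. t < k \<and> P t = mn)"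
  have r: "r < k \<and> P r = mn" unfolding r_def by (rule LeastI[of _ t0]) (use t0 in auto)
  have rl: "\<And>t. t < r \<Longrightarrow> P t > mn"
  proof -
    fix t assume "t < r"
    then have "\<not> (t < k \<and> P t = mn)" unfolding r_def by (rule not_less_Least)
    then show "P t > mn" using mn_le[of t] \<open>t < r\<close> r by force
  qed
  show "r < k \<and> (\<forall>m. 0 < m \<and> m < k \<longrightarrow> P r \<le> P (r + m))"
  proof (intro conjI allI impI)
    show "r < k" using r by simp
    fix m assume m: "0 < m \<and> m < k"
    show "P r \<le> P (r + m)"
    proof (cases "r + m < k")
      case True then show ?thesis using mn_le r by simp
    next
      case False
      then have "r + m = (r + m - k) + k" by simp
      then have "P (r + m) = P (r + m - k) - 1" using per by metis
      moreover have "P (r + m - k) > mn" by (rule rl) (use m False in arith)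
      ultimately show ?thesis using r by simp
    qed
  qed
  fix s assume s: "s < k \<and> (\<forall>m. 0 < m \<and> m < k \<longrightarrow> P s \<le> P (s + m))"
  have uniq: "False" if a: "a < b" "b < k" and ga: "\<forall>m. 0 < m \<and> m < k \<longrightarrow> P a \<le> P (a + m)"
     and gb: "\<forall>m. 0 < m \<and> m < k \<longrightarrow> P b \<le> P (b + m)" for a b
  proof -
    have "P a \<le> P (a + (b - a))" using ga[rule_format, of "b - a"] a by simp
    moreover have "P b \<le> P (b + (a + k - b))" using gb[rule_format, of "a + k - b"] a by simp
    moreover have "b + (a + k - b) = a + k" "a + (b - a) = b" using a by auto
    ultimately show False using per[of a] by simp
  qed
  have rg: "\<forall>m. 0 < m \<and> m < k \<longrightarrow> P r \<le> P (r + m)"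
    using \<open>r < k \<and> (\<forall>m. 0 < m \<and> m < k \<longrightarrow> P r \<le> P (r + m))\<close> by simp
  show "s = r"
  proof (rule ccontr)
    assume "s \<noteq> r"
    then have "s < r \<or> r < s" by auto
    then show False using uniq s r rg by blast
  qed
qed



definition rot :: "nat \<Rightarrow> nat \<Rightarrow> (nat \<Rightarrow> nat) \<Rightarrow> nat \<Rightarrow> nat" where
  "rot k r a = (\<lambda>j. if j < k then a ((j + r) mod k) else 0)"

lemma bij_mod: fixes k r :: nat shows "0 < k \<Longrightarrow> bij_betw (\<lambda>j. (j + r) mod k) {..<k} {..<k}"
proof -
  assume k: "0 < k"
  have inj: "inj_on (\<lambda>j. (j + r) mod k) {..<k}"
  proof (rule inj_onI)
    fix x y :: nat assume x: "x \<in> {..<k}" and y: "y \<in> {..<k}" and e: "(x + r) mod k = (y + r) mod k"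
    have "(int x + int r) mod int k = (int y + int r) mod int k"
      using arg_cong[OF e, of int] by (simp add: of_nat_mod)
    then have "(int x + int r - int r) mod int k = (int y + int r - int r) mod int k"
      by (rule mod_diff_cong) simp
    then have "int x mod int k = int y mod int k" by simp
    then have "int (x mod k) = int (y mod k)" by (simp only: of_nat_mod)
    then show "x = y" using x y by simp
  qed
  have "(\<lambda>j. (j + r) mod k) ` {..<k} = {..<k}"
    by (rule endo_inj_surj) (use inj in auto)
  then show ?thesis using inj by (simp add: bij_betw_def)
qed

lemma sum_rot: fixes k r :: nat assumes k: "0 < k"
  shows "(\<Sum>j<k. g ((j + r) mod k)) = (\<Sum>j<k. (g j :: 'a::comm_monoid_add))"
  by (rule sum.reindex_bij_betw[OF bij_mod[OF k]])

lemma prod_rot: fixes k r :: nat assumes k: "0 < k"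
  shows "(\<Prod>j<k. g ((j + r) mod k)) = (\<Prod>j<k. (g j :: 'a::comm_monoid_mult))"
  by (rule prod.reindex_bij_betw[OF bij_mod[OF k]])

lemma rot_Tall: "a \<in> Tall k n \<Longrightarrow> 0 < k \<Longrightarrow> rot k r a \<in> Tall k n"
proof -
  assume a: "a \<in> Tall k n" and k: "0 < k"
  have "(\<Sum>j<k. rot k r a j) = (\<Sum>j<k. a ((j + r) mod k))"
    by (rule sum.cong) (simp_all add: rot_def)
  also have "\<dots> = (\<Sum>j<k. a j)" by (rule sum_rot[OF k])
  finally show ?thesis using a unfolding Tall_def by (simp add: rot_def)
qed

lemma prod_fact_rot: "0 < k \<Longrightarrow>
  (\<Prod>j<k. of_nat (fact (rot k r a j)) :: rat) = (\<Prod>j<k. of_nat (fact (a j)))"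
  unfolding rot_def using prod_rot[of k "\<lambda>j. of_nat (fact (a j)) :: rat" r] by simp

lemma rot_rot: "rot k r2 (rot k r1 a) = rot k (r2 + r1) a"
proof
  fix j show "rot k r2 (rot k r1 a) j = rot k (r2 + r1) a j"
    unfolding rot_def using mod_add_left_eq[of "j + r2" k r1] by (simp add: add.assoc)
qed

lemma rot_mod: "rot k (r mod k) a = rot k r a"
proof
  fix j show "rot k (r mod k) a j = rot k r a j"
    unfolding rot_def using mod_add_right_eq[of j r k] by simp
qed

lemma rot_0: "a \<in> Tall k n \<Longrightarrow> rot k 0 a = a"
  unfolding rot_def Tall_def by auto

definition Sf :: "(nat \<Rightarrow> nat) \<Rightarrow> nat \<Rightarrow> nat \<Rightarrow> nat" where
  "Sf b k t = (\<Sum>j<t. b (j mod k))"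

lemma S_shift: "Sf b k (r + m) = Sf b k r + (\<Sum>j<m. b ((j + r) mod k))"
  by (induction m) (auto simp: Sf_def add.commute)

lemma S_per: "0 < k \<Longrightarrow> Sf b k (t + k) = Sf b k t + (\<Sum>j<k. b j)"
  using S_shift[of b k t k] sum_rot[of k b t] by simp

lemma good_iff:
  assumes a: "a \<in> Tall k n" and k: "0 < k"
  shows "rot k s a \<in> tuples k n \<longleftrightarrow>
    (\<forall>m. 0 < m \<and> m < k \<longrightarrow> int (Sf a k s) - 2 * int s \<le> int (Sf a k (s + m)) - 2 * int (s + m))"
proof -
  have ra: "rot k s a \<in> Tall k n" using rot_Tall[OF a k] .
  have ps: "(\<Sum>j\<le>s'. rot k s a j) = Sf a k (s + Suc s') - Sf a k s" if "s' + 2 \<le> k" for s'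
  proof -
    have "(\<Sum>j\<le>s'. rot k s a j) = (\<Sum>j<Suc s'. a ((j + s) mod k))"
      unfolding lessThan_Suc_atMost using that by (intro sum.cong) (auto simp: rot_def)
    then show ?thesis using S_shift[of a k s "Suc s'"] by simp
  qed
  have "rot k s a \<in> tuples k n \<longleftrightarrow> (\<forall>s'. s' + 2 \<le> k \<longrightarrow> (\<Sum>j\<le>s'. rot k s a j) \<ge> 2 * s' + 2)"
    using ra unfolding tuples_def Tall_def by simp
  also have "\<dots> \<longleftrightarrow> (\<forall>s'. s' + 2 \<le> k \<longrightarrow> Sf a k (s + Suc s') - Sf a k s \<ge> 2 * s' + 2)"
    using ps by simp
  also have "\<dots> \<longleftrightarrow> (\<forall>m. 0 < m \<and> m < k \<longrightarrow> int (Sf a k s) - 2 * int s \<le> int (Sf a k (s + m)) - 2 * int (s + m))"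
  proof -
    have mono: "Sf a k s \<le> Sf a k (s + m)" for m using S_shift[of a k s m] by simp
    show ?thesis
    proof (intro iffI allI impI)
      fix m assume H: "\<forall>s'. s' + 2 \<le> k \<longrightarrow> Sf a k (s + Suc s') - Sf a k s \<ge> 2 * s' + 2"
        and m: "0 < m \<and> m < k"
      obtain m' where m': "m = Suc m'" using m by (cases m) auto
      have "Sf a k (s + Suc m') - Sf a k s \<ge> 2 * m' + 2" using H[rule_format, of m'] m m' by simp
      then have "Sf a k (s + m) - Sf a k s \<ge> 2 * m" using m' by simp
      moreover obtain d where "Sf a k (s + m) = Sf a k s + d" using mono[of m] le_Suc_ex by blast
      ultimately show "int (Sf a k s) - 2 * int s \<le> int (Sf a k (s + m)) - 2 * int (s + m)"
        by simp
    next
      fix s' assume H: "\<forall>m. 0 < m \<and> m < k \<longrightarrow> int (Sf a k s) - 2 * int s \<le> int (Sf a k (s + m)) - 2 * int (s + m)"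
        and s': "s' + 2 \<le> k"
      have "int (Sf a k s) - 2 * int s \<le> int (Sf a k (s + Suc s')) - 2 * int (s + Suc s')"
        using H[rule_format, of "Suc s'"] s' by simp
      moreover obtain d where "Sf a k (s + Suc s') = Sf a k s + d" using mono[of "Suc s'"] le_Suc_ex by blast
      ultimately show "Sf a k (s + Suc s') - Sf a k s \<ge> 2 * s' + 2"
        by simp
    qed
  qed
  finally show ?thesis .
qed



theorem mainTheorem10:
  fixes k n :: nat
  assumes "k \<ge> 1" and "n = 2 * k - 1"
  shows "(of_nat k :: rat) ^ (n - 1) =
         (\<Sum>i\<in>tuples k n. of_nat (fact n) / (\<Prod>j<k. of_nat (fact (i j))))"
proof -
  have k0: "0 < k" using assms by simp
  define G where "G = tuples k n"
  define M where "M = (\<lambda>i. of_nat (fact n) / (\<Prod>j<k. of_nat (fact (i j))) :: rat)"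
  define P where "P = (\<lambda>a t. int (Sf a k t) - 2 * int t)"
  have GT: "G \<subseteq> Tall k n" unfolding G_def tuples_def Tall_def by auto
  have per: "P a (t + k) = P a t - 1" if a: "a \<in> Tall k n" for a t
  proof -
    have "Sf a k (t + k) = Sf a k t + n" using S_per[OF k0, of a t] a by (simp add: Tall_def)
    then show ?thesis unfolding P_def using assms by simp
  qed
  have cyc: "\<exists>!s. s < k \<and> (\<forall>m. 0 < m \<and> m < k \<longrightarrow> P a s \<le> P a (s + m))"
    if a: "a \<in> Tall k n" for a
    by (rule cycle[where P="P a", OF k0 per[OF a]])
  have gi: "rot k s a \<in> G \<longleftrightarrow> (\<forall>m. 0 < m \<and> m < k \<longrightarrow> P a s \<le> P a (s + m))"
    if a: "a \<in> Tall k n" for a s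
    unfolding G_def P_def by (rule good_iff[OF a k0])
  have rotk: "rot k (k - s + s) b = b" if "b \<in> Tall k n" "s < k" for b s
  proof -
    have "rot k (k - s + s) b = rot k ((k - s + s) mod k) b" by (simp only: rot_mod)
    also have "(k - s + s) mod k = 0" using that by simp
    finally show ?thesis using rot_0[OF that(1)] by simp
  qed
  have inj: "inj_on (\<lambda>(a, r). rot k r a) (G \<times> {..<k})"
  proof (rule inj_onI)
    fix x y assume x: "x \<in> G \<times> {..<k}" and y: "y \<in> G \<times> {..<k}"
      and exy: "(\<lambda>(a, r). rot k r a) x = (\<lambda>(a, r). rot k r a) y"
    obtain a r where xa: "x = (a, r)" by (cases x)
    obtain a' r' where ya: "y = (a', r')" by (cases y)
    have a: "a \<in> G" and r: "r \<in> {..<k}" and a': "a' \<in> G" and r': "r' \<in> {..<k}"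
      using x y xa ya by auto
    have e: "rot k r a = rot k r' a'" using exy xa ya by simp
    have aT: "a \<in> Tall k n" and aT': "a' \<in> Tall k n" using a a' GT by auto
    define d where "d = (k - r' + r) mod k"
    have "a' = rot k (k - r' + r') a'" using rotk[OF aT', of r'] r' by simp
    also have "\<dots> = rot k (k - r') (rot k r' a')" by (simp add: rot_rot)
    also have "\<dots> = rot k (k - r') (rot k r a)" using e by simp
    also have "\<dots> = rot k d a" unfolding d_def by (simp add: rot_rot rot_mod)
    finally have a'd: "a' = rot k d a" .
    have dk: "d < k" unfolding d_def using k0 by simp
    have g0: "\<forall>m. 0 < m \<and> m < k \<longrightarrow> P a 0 \<le> P a (0 + m)"
      using gi[OF aT, of 0] a rot_0[OF aT] by simp
    have gd: "\<forall>m. 0 < m \<and> m < k \<longrightarrow> P a d \<le> P a (d + m)"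
      using gi[OF aT, of d] a' a'd by simp
    have "d = 0" using cyc[OF aT] g0 gd dk k0 by blast
    have "r = r'"
    proof (cases "r' \<le> r")
      case True
      then have e2: "k - r' + r = (r - r') + k" using r' by simp
      have "d = (r - r') mod k" unfolding d_def e2 by (rule mod_add_self2)
      then have "d = r - r'" using r by simp
      then show ?thesis using \<open>d = 0\<close> True by simp
    next
      case False
      then have "d = k - r' + r" unfolding d_def using r r' by simp
      then show ?thesis using \<open>d = 0\<close> False r' by simp
    qed
    moreover have "a = a'" using a'd \<open>d = 0\<close> rot_0[OF aT] by simp
    ultimately show "x = y" using xa ya by simp
  qed
  have img: "(\<lambda>(a, r). rot k r a) ` (G \<times> {..<k}) = Tall k n"
  proof
    show "(\<lambda>(a, r). rot k r a) ` (G \<times> {..<k}) \<subseteq> Tall k n"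
      using GT rot_Tall[OF _ k0] by auto
  next
    show "Tall k n \<subseteq> (\<lambda>(a, r). rot k r a) ` (G \<times> {..<k})"
    proof
      fix b assume b: "b \<in> Tall k n"
      obtain s where s: "s < k" "\<forall>m. 0 < m \<and> m < k \<longrightarrow> P b s \<le> P b (s + m)"
        using cyc[OF b] by blast
      have sG: "rot k s b \<in> G" using gi[OF b] s by simp
      have "rot k ((k - s) mod k) (rot k s b) = rot k ((k - s) mod k + s) b"
        by (simp add: rot_rot)
      also have "\<dots> = rot k (((k - s) mod k + s) mod k) b" by (simp only: rot_mod)
      also have "\<dots> = rot k ((k - s + s) mod k) b" by (simp only: mod_add_left_eq)
      also have "\<dots> = rot k (k - s + s) b" by (simp only: rot_mod)
      also have "\<dots> = b" using rotk[OF b s(1)] .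
      finally have "b = (\<lambda>(a, r). rot k r a) (rot k s b, (k - s) mod k)" by simp
      moreover have "(rot k s b, (k - s) mod k) \<in> G \<times> {..<k}" using sG k0 by simp
      ultimately show "b \<in> (\<lambda>(a, r). rot k r a) ` (G \<times> {..<k})" by blast
    qed
  qed
  have bij: "bij_betw (\<lambda>(a, r). rot k r a) (G \<times> {..<k}) (Tall k n)"
    using inj img by (simp add: bij_betw_def)
  have mn: "finite (Tall k n)"
    "(\<Sum>a\<in>Tall k n. 1 / (\<Prod>j<k. of_nat (fact (a j)) :: rat)) = of_nat k ^ n / of_nat (fact n)"
    using multinom[of k n] by auto
  have "(\<Sum>b\<in>Tall k n. M b) = of_nat (fact n) * (\<Sum>a\<in>Tall k n. 1 / (\<Prod>j<k. of_nat (fact (a j)) :: rat))"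
    unfolding M_def sum_distrib_left by simp
  also have "\<dots> = of_nat k ^ n" using mn(2) by simp
  finally have sT: "(\<Sum>b\<in>Tall k n. M b) = of_nat k ^ n" .
  have "(\<Sum>b\<in>Tall k n. M b) = (\<Sum>x\<in>G \<times> {..<k}. M ((\<lambda>(a, r). rot k r a) x))"
    using sum.reindex_bij_betw[OF bij, of M] by simp
  also have "\<dots> = (\<Sum>x\<in>G \<times> {..<k}. M (fst x))"
    by (rule sum.cong) (auto simp: M_def prod_fact_rot[OF k0] simp del: of_nat_fact)
  also have "\<dots> = (\<Sum>a\<in>G. \<Sum>r<k. M a)"
    by (subst sum.cartesian_product) (simp add: case_prod_beta)
  also have "\<dots> = of_nat k * (\<Sum>a\<in>G. M a)"
    by (simp add: sum_distrib_left)
  finally have X: "of_nat k * (\<Sum>a\<in>G. M a) = (of_nat k :: rat) ^ n" using sT by simp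
  have "n = Suc (n - 1)" using assms by simp
  then have "(of_nat k :: rat) ^ n = of_nat k * of_nat k ^ (n - 1)" by (metis power_Suc)
  then have "of_nat k * (\<Sum>a\<in>G. M a) = (of_nat k :: rat) * of_nat k ^ (n - 1)" using X by simp
  then show ?thesis using k0 unfolding G_def M_def by simp
qed

end
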